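(* Let $(\mathscr C,A,\psi)$ be an entwining structure. Then the category ${_A^{\mathscr C}}Ctr(\psi)$ of entwined contramodules over $(\mathscr C,A,\psi)$ has a set of generators.
   Context: $K$ is a field, $(U',U):=Hom_K(U',U)$. $\mathscr C$ is a coalgebra with several objects (objects $Ob(\mathscr C)$, vector spaces $\mathscr C(X,Y)$, coassociative counital maps $\delta_{XYZ}:\mathscr C(X,Z)\to\mathscr C(Y,Z)\otimes\mathscr C(X,Y)$, $\epsilon_X:\mathscr C(X,X)\to K$). $A$ is a $K$-algebra and $\psi=\{\psi_{XY}:\mathscr C(X,Y)\otimes A\to A\otimes\mathscr C(X,Y)\}$, $\psi(f\otimes a)=a_\psi\otimes f^\psi$, is an entwining: $a_\psi\otimes\delta_{XYZ}(f^\psi)=a_{\psi\psi}\otimes f_{Y1}^\psi\otimes f_{Y2}^\psi$, $(ab)_\psi\otimes f^\psi=a_\psi b_\psi\otimes f^{\psi\psi}$, $\psi(f\otimes1)=1\otimes f$, $a_\psi\epsilon_Z(g^\psi)=\epsilon_Z(g)a$. An entwined contramodule is a family of vector spaces $\mathcal M(X)$ with contramodule maps $\pi_{XY}:(\mathscr C(X,Y),\mathcal M(Y))\to\mathcal M(X)$ (satisfying $\pi_{XZ}\circ(\delta_{XYZ},\mathcal M(Z))=\pi_{XY}\circ(\mathscr C(X,Y),\pi_{YZ})$ and $\pi_{XX}\circ(\epsilon_X,\mathcal M(X))=id$) and left $A$-module structures $\mu_X:\mathcal M(X)\to(A,\mathcal M(X))$ with $\mu_X\circ\pi_{XY}=(A,\pi_{XY})\circ(\psi_{XY},\mathcal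 M(Y))\circ(\mathscr C(X,Y),\mu_Y)$ (via hom-tensor identifications); morphisms are objectwise $A$-linear maps compatible with the $\pi$'s. This category is ${_A^{\mathscr C}}Ctr(\psi)$. *)

theory Defs
  imports "HOL-Library.FuncSet" "HOL-Library.Function_Algebras"
begin

text \<open>
Objects of the several-object coalgebra are the elements of the type 'x.
Each Hom-space C(X,Y) is the K-vector space with basis B X Y (a subset of 'b),
i.e. finitely supported functions on B X Y.  Tensor products of such spaces
have the product bases.  Hence
  delta_XYZ : C(X,Z) -> C(Y,Z) (x) C(X,Y)  is given by  dlt X Y Z s (p,q),
     the coefficient of e_p (x) e_q in delta(e_s);
  eps_X : C(X,X) -> K  is given by  eps X s = eps_X(e_s);
  psi_XY : C(X,Y) (x) A -> A (x) C(X,Y)  is given by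
     psi(e_s (x) a) = sum_u (psi X Y s a u) (x) e_u.
A linear map C(X,Y) -> V is the same as a function B X Y -> V, so
Hom_K(C(X,Y), M(Y)) is  B X Y ->E carrier(M Y).
The K-algebra A is the type 'a (a ring with unit) with scalar multiplication sA.
\<close>

definition k_algebra :: "('k::field \<Rightarrow> 'a::ring_1 \<Rightarrow> 'a) \<Rightarrow> bool" where
  "k_algebra sA \<longleftrightarrow>
     (\<forall>k l a. sA k (sA l a) = sA (k * l) a) \<and> (\<forall>a. sA 1 a = a)
   \<and> (\<forall>k l a. sA (k + l) a = sA k a + sA l a)
   \<and> (\<forall>k a b. sA k (a + b) = sA k a + sA k b)
   \<and> (\<forall>k a b. sA k (a * b) = sA k a * b)
   \<and> (\<forall>k a b. sA k (a * b) = a * sA k b)"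

definition coalgebra_so ::
  "('x \<Rightarrow> 'x \<Rightarrow> 'b set) \<Rightarrow> ('x \<Rightarrow> 'x \<Rightarrow> 'x \<Rightarrow> 'b \<Rightarrow> 'b \<times> 'b \<Rightarrow> 'k::field)
   \<Rightarrow> ('x \<Rightarrow> 'b \<Rightarrow> 'k) \<Rightarrow> bool" where
  "coalgebra_so B dlt eps \<longleftrightarrow>
     (\<forall>X Y Z s. s \<in> B X Z \<longrightarrow>
        finite {pq. dlt X Y Z s pq \<noteq> 0} \<and> {pq. dlt X Y Z s pq \<noteq> 0} \<subseteq> B Y Z \<times> B X Y)
   \<and> (\<forall>W X Y Z b p q r. b \<in> B W Z \<longrightarrow> p \<in> B Y Z \<longrightarrow> q \<in> B X Y \<longrightarrow> r \<in> B W X \<longrightarrow>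
        (\<Sum>s\<in>{s \<in> B X Z. dlt W X Z b (s, r) \<noteq> 0}. dlt W X Z b (s, r) * dlt X Y Z s (p, q))
      = (\<Sum>t\<in>{t \<in> B W Y. dlt W Y Z b (p, t) \<noteq> 0}. dlt W Y Z b (p, t) * dlt W X Y t (q, r)))
   \<and> (\<forall>X Y b q. b \<in> B X Y \<longrightarrow> q \<in> B X Y \<longrightarrow>
        (\<Sum>p\<in>{p \<in> B Y Y. dlt X Y Y b (p, q) \<noteq> 0}. eps Y p * dlt X Y Y b (p, q))
      = (if q = b then 1 else 0))
   \<and> (\<forall>X Y b p. b \<in> B X Y \<longrightarrow> p \<in> B X Y \<longrightarrow>
        (\<Sum>r\<in>{r \<in> B X X. dlt X X Y b (p, r) \<noteq> 0}. eps X r * dlt X X Y b (p, r))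
      = (if p = b then 1 else 0))"

definition entwining ::
  "('x \<Rightarrow> 'x \<Rightarrow> 'b set) \<Rightarrow> ('x \<Rightarrow> 'x \<Rightarrow> 'x \<Rightarrow> 'b \<Rightarrow> 'b \<times> 'b \<Rightarrow> 'k::field)
   \<Rightarrow> ('x \<Rightarrow> 'b \<Rightarrow> 'k) \<Rightarrow> ('k \<Rightarrow> 'a::ring_1 \<Rightarrow> 'a)
   \<Rightarrow> ('x \<Rightarrow> 'x \<Rightarrow> 'b \<Rightarrow> 'a \<Rightarrow> 'b \<Rightarrow> 'a) \<Rightarrow> bool" where
  "entwining B dlt eps sA psi \<longleftrightarrow>
     (\<forall>X Y s a. s \<in> B X Y \<longrightarrow>
        finite {u. psi X Y s a u \<noteq> 0} \<and> {u. psi X Y s a u \<noteq> 0} \<subseteq> B X Y)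
   \<and> (\<forall>X Y s a b. s \<in> B X Y \<longrightarrow> psi X Y s (a + b) = (\<lambda>u. psi X Y s a u + psi X Y s b u))
   \<and> (\<forall>X Y s k a. s \<in> B X Y \<longrightarrow> psi X Y s (sA k a) = (\<lambda>u. sA k (psi X Y s a u)))
   \<and> (\<forall>X Y Z s a p q. s \<in> B X Z \<longrightarrow> p \<in> B Y Z \<longrightarrow> q \<in> B X Y \<longrightarrow>
        (\<Sum>u\<in>{u \<in> B X Z. psi X Z s a u \<noteq> 0}. sA (dlt X Y Z u (p, q)) (psi X Z s a u))
      = (\<Sum>pq\<in>{pq \<in> B Y Z \<times> B X Y. dlt X Y Z s pq \<noteq> 0}.
           psi Y Z (fst pq) (sA (dlt X Y Z s pq) (psi X Y (snd pq) a q)) p))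
   \<and> (\<forall>X Y s a b u. s \<in> B X Y \<longrightarrow>
        psi X Y s (a * b) u = (\<Sum>v\<in>{v \<in> B X Y. psi X Y s a v \<noteq> 0}. psi X Y s a v * psi X Y v b u))
   \<and> (\<forall>X Y s. s \<in> B X Y \<longrightarrow> psi X Y s 1 = (\<lambda>u. if u = s then 1 else 0))
   \<and> (\<forall>Z s a. s \<in> B Z Z \<longrightarrow>
        (\<Sum>u\<in>{u \<in> B Z Z. psi Z Z s a u \<noteq> 0}. sA (eps Z u) (psi Z Z s a u)) = sA (eps Z s) a)"

text \<open>Data of an entwined contramodule: carriers M(X) (subgroups of an ambient
abelian group 'm), left A-actions, and contramodule maps pi_XY.\<close>
record ('x, 'm, 'a, 'b) ectr =
  ecar :: "'x \<Rightarrow> 'm set"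
  eact :: "'x \<Rightarrow> 'a \<Rightarrow> 'm \<Rightarrow> 'm"
  epi  :: "'x \<Rightarrow> 'x \<Rightarrow> ('b \<Rightarrow> 'm) \<Rightarrow> 'm"

text \<open>The K-vector space structure of M(X) is the one induced by the A-action
(K-linearity of mu_X forces k m = (k 1_A) m).\<close>
definition kact :: "('k \<Rightarrow> 'a::ring_1 \<Rightarrow> 'a) \<Rightarrow> ('x, 'm, 'a, 'b) ectr \<Rightarrow> 'x \<Rightarrow> 'k \<Rightarrow> 'm \<Rightarrow> 'm" where
  "kact sA M X k m = eact M X (sA k 1) m"

definition entw_ctr ::
  "('x \<Rightarrow> 'x \<Rightarrow> 'b set) \<Rightarrow> ('x \<Rightarrow> 'x \<Rightarrow> 'x \<Rightarrow> 'b \<Rightarrow> 'b \<times> 'b \<Rightarrow> 'k::field)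
   \<Rightarrow> ('x \<Rightarrow> 'b \<Rightarrow> 'k) \<Rightarrow> ('k \<Rightarrow> 'a::ring_1 \<Rightarrow> 'a)
   \<Rightarrow> ('x \<Rightarrow> 'x \<Rightarrow> 'b \<Rightarrow> 'a \<Rightarrow> 'b \<Rightarrow> 'a) \<Rightarrow> ('x, 'm::ab_group_add, 'a, 'b) ectr \<Rightarrow> bool" where
  "entw_ctr B dlt eps sA psi M \<longleftrightarrow>
     \<comment> \<open>each M(X) is an additive subgroup, closed under the A-action\<close>
     (\<forall>X. 0 \<in> ecar M X \<and> (\<forall>m\<in>ecar M X. \<forall>n\<in>ecar M X. m + n \<in> ecar M X)
          \<and> (\<forall>m\<in>ecar M X. - m \<in> ecar M X))
   \<and> (\<forall>X a m. m \<in> ecar M X \<longrightarrow> eact M X a m \<in> ecar M X)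
     \<comment> \<open>left A-module axioms\<close>
   \<and> (\<forall>X m. m \<in> ecar M X \<longrightarrow> eact M X 1 m = m)
   \<and> (\<forall>X a b m. m \<in> ecar M X \<longrightarrow> eact M X (a * b) m = eact M X a (eact M X b m))
   \<and> (\<forall>X a b m. m \<in> ecar M X \<longrightarrow> eact M X (a + b) m = eact M X a m + eact M X b m)
   \<and> (\<forall>X a m n. m \<in> ecar M X \<longrightarrow> n \<in> ecar M X \<longrightarrow>
        eact M X a (m + n) = eact M X a m + eact M X a n)
     \<comment> \<open>pi_XY : Hom(C(X,Y), M(Y)) -> M(X) is a K-linear map\<close>
   \<and> (\<forall>X Y \<phi>. \<phi> \<in> B X Y \<rightarrow>\<^sub>E ecar M Y \<longrightarrow> epi M X Y \<phi> \<in> ecar M X)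
   \<and> (\<forall>X Y \<phi> \<phi>'. \<phi> \<in> B X Y \<rightarrow>\<^sub>E ecar M Y \<longrightarrow> \<phi>' \<in> B X Y \<rightarrow>\<^sub>E ecar M Y \<longrightarrow>
        epi M X Y (\<lambda>s\<in>B X Y. \<phi> s + \<phi>' s) = epi M X Y \<phi> + epi M X Y \<phi>')
   \<and> (\<forall>X Y \<phi> k. \<phi> \<in> B X Y \<rightarrow>\<^sub>E ecar M Y \<longrightarrow>
        epi M X Y (\<lambda>s\<in>B X Y. kact sA M Y k (\<phi> s)) = kact sA M X k (epi M X Y \<phi>))
     \<comment> \<open>contraassociativity: pi_XZ o (delta_XYZ, M(Z)) = pi_XY o (C(X,Y), pi_YZ)\<close>
   \<and> (\<forall>X Y Z \<Phi>. \<Phi> \<in> (B Y Z \<times> B X Y) \<rightarrow>\<^sub>E ecar M Z \<longrightarrow>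
        epi M X Z (\<lambda>s\<in>B X Z. \<Sum>pq\<in>{pq \<in> B Y Z \<times> B X Y. dlt X Y Z s pq \<noteq> 0}.
                                  kact sA M Z (dlt X Y Z s pq) (\<Phi> pq))
      = epi M X Y (\<lambda>q\<in>B X Y. epi M Y Z (\<lambda>p\<in>B Y Z. \<Phi> (p, q))))
     \<comment> \<open>counitality: pi_XX o (eps_X, M(X)) = id\<close>
   \<and> (\<forall>X m. m \<in> ecar M X \<longrightarrow> epi M X X (\<lambda>s\<in>B X X. kact sA M X (eps X s) m) = m)
     \<comment> \<open>entwined compatibility:
         mu_X o pi_XY = (A, pi_XY) o (psi_XY, M(Y)) o (C(X,Y), mu_Y)\<close>
   \<and> (\<forall>X Y a \<phi>. \<phi> \<in> B X Y \<rightarrow>\<^sub>E ecar M Y \<longrightarrow>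
        eact M X a (epi M X Y \<phi>)
      = epi M X Y (\<lambda>s\<in>B X Y. \<Sum>u\<in>{u \<in> B X Y. psi X Y s a u \<noteq> 0}. eact M Y (psi X Y s a u) (\<phi> u)))"

definition ectr_hom ::
  "('x \<Rightarrow> 'x \<Rightarrow> 'b set) \<Rightarrow> ('x, 'm::ab_group_add, 'a, 'b) ectr
   \<Rightarrow> ('x, 'n::ab_group_add, 'a, 'b) ectr \<Rightarrow> ('x \<Rightarrow> 'm \<Rightarrow> 'n) \<Rightarrow> bool" where
  "ectr_hom B M N F \<longleftrightarrow>
     (\<forall>X m. m \<in> ecar M X \<longrightarrow> F X m \<in> ecar N X)
   \<and> (\<forall>X m n. m \<in> ecar M X \<longrightarrow> n \<in> ecar M X \<longrightarrow> F X (m + n) = F X m + F X n)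
   \<and> (\<forall>X a m. m \<in> ecar M X \<longrightarrow> F X (eact M X a m) = eact N X a (F X m))
   \<and> (\<forall>X Y \<phi>. \<phi> \<in> B X Y \<rightarrow>\<^sub>E ecar M Y \<longrightarrow>
        F X (epi M X Y \<phi>) = epi N X Y (\<lambda>s\<in>B X Y. F Y (\<phi> s)))"

definition hom_eq :: "('x, 'm, 'a, 'b) ectr \<Rightarrow> ('x \<Rightarrow> 'm \<Rightarrow> 'n) \<Rightarrow> ('x \<Rightarrow> 'm \<Rightarrow> 'n) \<Rightarrow> bool" where
  "hom_eq M F G \<longleftrightarrow> (\<forall>X. \<forall>m\<in>ecar M X. F X m = G X m)"

end

theory Submission
  imports Defs
begin

locale ent =
  fixes B :: "'x \<Rightarrow> 'x \<Rightarrow> 'b set"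
    and dlt :: "'x \<Rightarrow> 'x \<Rightarrow> 'x \<Rightarrow> 'b \<Rightarrow> 'b \<times> 'b \<Rightarrow> 'k::field"
    and eps :: "'x \<Rightarrow> 'b \<Rightarrow> 'k"
    and sA :: "'k \<Rightarrow> 'a::ring_1 \<Rightarrow> 'a"
    and psi :: "'x \<Rightarrow> 'x \<Rightarrow> 'b \<Rightarrow> 'a \<Rightarrow> 'b \<Rightarrow> 'a"
  assumes kA: "k_algebra sA" and co: "coalgebra_so B dlt eps" and en: "entwining B dlt eps sA psi"
begin

lemma sA_comp: "sA k (sA l a) = sA (k*l) a" using kA unfolding k_algebra_def by blast
lemma sA_one: "sA 1 a = a" using kA unfolding k_algebra_def by blast
lemma sA_addk: "sA (k+l) a = sA k a + sA l a" using kA unfolding k_algebra_def by blast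
lemma sA_adda: "sA k (a+b) = sA k a + sA k b" using kA unfolding k_algebra_def by blast
lemma sA_ml: "sA k (a*b) = sA k a * b" using kA unfolding k_algebra_def by blast
lemma sA_mr: "sA k (a*b) = a * sA k b" using kA unfolding k_algebra_def by blast

lemma sA_zk[simp]: "sA 0 a = 0"
proof -
  have "sA 0 a + sA 0 a = sA 0 a + 0" using sA_addk[of 0 0 a] by simp
  then show ?thesis by simp
qed
lemma sA_z[simp]: "sA k 0 = 0"
proof -
  have "sA k 0 + sA k 0 = sA k 0 + 0" using sA_adda[of k 0 0] by simp
  then show ?thesis by simp
qed
lemma sA_sum: "sA k (sum f A) = (\<Sum>x\<in>A. sA k (f x))"
  by (induction A rule: infinite_finite_induct) (simp_all add: sA_adda)
lemma sA_sumk: "sA (sum f A) a = (\<Sum>x\<in>A. sA (f x) a)"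
  by (induction A rule: infinite_finite_induct) (simp_all add: sA_addk)
lemma sA_mult1: "sA k 1 * x = sA k x" using sA_ml[of k 1 x] by simp
lemma sA_swap: "x * sA k y = sA k x * y" by (metis sA_ml sA_mr)
lemma sA_comm: "sA k (sA l a) = sA l (sA k a)" by (simp add: sA_comp mult.commute)

lemma dlt_fin: "s \<in> B X Z \<Longrightarrow> finite {pq. dlt X Y Z s pq \<noteq> 0}"
  using co[unfolded coalgebra_so_def, THEN conjunct1] by blast
lemma dlt_sub: "s \<in> B X Z \<Longrightarrow> dlt X Y Z s pq \<noteq> 0 \<Longrightarrow> pq \<in> B Y Z \<times> B X Y"
proof -
  assume "s \<in> B X Z" "dlt X Y Z s pq \<noteq> 0"
  moreover have "{pq. dlt X Y Z s pq \<noteq> 0} \<subseteq> B Y Z \<times> B X Y" using co[unfolded coalgebra_so_def, THEN conjunct1] \<open>s \<in> B X Z\<close> by blast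
  ultimately show ?thesis by blast
qed
lemma coassoc: "b \<in> B W Z \<Longrightarrow> p \<in> B Y Z \<Longrightarrow> q \<in> B X Y \<Longrightarrow> r \<in> B W X \<Longrightarrow>
        (\<Sum>s\<in>{s \<in> B X Z. dlt W X Z b (s, r) \<noteq> 0}. dlt W X Z b (s, r) * dlt X Y Z s (p, q))
      = (\<Sum>t\<in>{t \<in> B W Y. dlt W Y Z b (p, t) \<noteq> 0}. dlt W Y Z b (p, t) * dlt W X Y t (q, r))"
  using co unfolding coalgebra_so_def by blast
lemma counit2: "b \<in> B X Y \<Longrightarrow> p \<in> B X Y \<Longrightarrow>
        (\<Sum>r\<in>{r \<in> B X X. dlt X X Y b (p, r) \<noteq> 0}. eps X r * dlt X X Y b (p, r))
      = (if p = b then 1 else 0)"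
  using co unfolding coalgebra_so_def by blast

lemma psi_fs: "s \<in> B X Y \<Longrightarrow> finite {u. psi X Y s a u \<noteq> 0} \<and> {u. psi X Y s a u \<noteq> 0} \<subseteq> B X Y"
  using en[unfolded entwining_def, THEN conjunct1] by blast
lemma psi_fin: "s \<in> B X Y \<Longrightarrow> finite {u. psi X Y s a u \<noteq> 0}"
  using psi_fs by blast
lemma psi_sub: "s \<in> B X Y \<Longrightarrow> psi X Y s a u \<noteq> 0 \<Longrightarrow> u \<in> B X Y"
  using psi_fs by blast
lemma psi_add: "s \<in> B X Y \<Longrightarrow> psi X Y s (a + b) u = psi X Y s a u + psi X Y s b u"
  using en unfolding entwining_def by metis
lemma psi_sA: "s \<in> B X Y \<Longrightarrow> psi X Y s (sA k a) u = sA k (psi X Y s a u)"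
  using en unfolding entwining_def by metis
lemma psi_compat: "s \<in> B X Z \<Longrightarrow> p \<in> B Y Z \<Longrightarrow> q \<in> B X Y \<Longrightarrow>
        (\<Sum>u\<in>{u \<in> B X Z. psi X Z s a u \<noteq> 0}. sA (dlt X Y Z u (p, q)) (psi X Z s a u))
      = (\<Sum>pq\<in>{pq \<in> B Y Z \<times> B X Y. dlt X Y Z s pq \<noteq> 0}.
           psi Y Z (fst pq) (sA (dlt X Y Z s pq) (psi X Y (snd pq) a q)) p)"
  using en unfolding entwining_def by blast
lemma psi_mult: "s \<in> B X Y \<Longrightarrow>
        psi X Y s (a * b) u = (\<Sum>v\<in>{v \<in> B X Y. psi X Y s a v \<noteq> 0}. psi X Y s a v * psi X Y v b u)"
  using en unfolding entwining_def by blast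
lemma psi_one: "s \<in> B X Y \<Longrightarrow> psi X Y s 1 u = (if u = s then 1 else 0)"
  using en unfolding entwining_def by metis
lemma psi_zero[simp]: "s \<in> B X Y \<Longrightarrow> psi X Y s 0 u = 0"
proof -
  assume s: "s \<in> B X Y"
  have "psi X Y s 0 u + psi X Y s 0 u = psi X Y s 0 u + 0" using psi_add[OF s, of 0 0 u] by simp
  then show ?thesis by simp
qed

lemma sum_ext:
  assumes "finite T" "{x \<in> S. g x \<noteq> 0} \<subseteq> T" "\<And>x. x \<in> T \<Longrightarrow> \<not> (x \<in> S \<and> g x \<noteq> 0) \<Longrightarrow> h x = 0"
  shows "(\<Sum>x\<in>{x \<in> S. g x \<noteq> 0}. h x) = (\<Sum>x\<in>T. h x)"
  by (rule sum.mono_neutral_left) (use assms in auto)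

definition gcar :: "'x \<Rightarrow> 'x \<Rightarrow> ('b \<Rightarrow> 'a) set" where
  "gcar W X = {f. \<forall>s. s \<notin> B X W \<longrightarrow> f s = 0}"
definition gact :: "'x \<Rightarrow> 'x \<Rightarrow> 'a \<Rightarrow> ('b \<Rightarrow> 'a) \<Rightarrow> ('b \<Rightarrow> 'a)" where
  "gact W X a f = (\<lambda>t. if t \<in> B X W then
     (\<Sum>u\<in>{u \<in> B X W. psi X W t a u \<noteq> 0}. psi X W t a u * f u) else 0)"
definition gpi :: "'x \<Rightarrow> 'x \<Rightarrow> 'x \<Rightarrow> ('b \<Rightarrow> 'b \<Rightarrow> 'a) \<Rightarrow> ('b \<Rightarrow> 'a)" where
  "gpi W X Z \<phi> = (\<lambda>t. if t \<in> B X W then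
     (\<Sum>pq\<in>{pq \<in> B Z W \<times> B X Z. dlt X Z W t pq \<noteq> 0}. sA (dlt X Z W t pq) (\<phi> (snd pq) (fst pq))) else 0)"
definition G :: "'x \<Rightarrow> ('x, 'b \<Rightarrow> 'a, 'a, 'b) ectr" where
  "G W = \<lparr>ecar = gcar W, eact = gact W, epi = gpi W\<rparr>"

lemma G_simps[simp]: "ecar (G W) = gcar W" "eact (G W) = gact W" "epi (G W) = gpi W"
  by (simp_all add: G_def)

lemma gact_ext:
  assumes t: "t \<in> B X W" and T: "finite T" "{u. psi X W t a u \<noteq> 0} \<subseteq> T"
  shows "gact W X a f t = (\<Sum>u\<in>T. psi X W t a u * f u)"
proof -
  have "(\<Sum>u\<in>{u \<in> B X W. psi X W t a u \<noteq> 0}. psi X W t a u * f u) = (\<Sum>u\<in>T. psi X W t a u * f u)"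
    proof (rule sum_ext)
    fix x assume "x \<in> T" "\<not> (x \<in> B X W \<and> psi X W t a x \<noteq> 0)"
    then have "psi X W t a x = 0" using psi_sub[OF t, of a x] by blast
    then show "psi X W t a x * f x = 0" by simp
  qed (use T in auto)
  then show ?thesis using t by (simp add: gact_def)
qed

lemma gpi_ext:
  assumes t: "t \<in> B X W" and RS: "finite R" "finite S"
    "\<And>r s. dlt X Z W t (r,s) \<noteq> 0 \<Longrightarrow> r \<in> R \<and> s \<in> S"
  shows "gpi W X Z \<phi> t = (\<Sum>r\<in>R. \<Sum>s\<in>S. sA (dlt X Z W t (r,s)) (\<phi> s r))"
proof -
  have "(\<Sum>pq\<in>{pq \<in> B Z W \<times> B X Z. dlt X Z W t pq \<noteq> 0}. sA (dlt X Z W t pq) (\<phi> (snd pq) (fst pq)))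
     = (\<Sum>pq\<in>R \<times> S. sA (dlt X Z W t pq) (\<phi> (snd pq) (fst pq)))"
    proof (rule sum_ext)
    fix pq assume "pq \<in> R \<times> S" "\<not> (pq \<in> B Z W \<times> B X Z \<and> dlt X Z W t pq \<noteq> 0)"
    then have "dlt X Z W t pq = 0" using dlt_sub[OF t, of Z pq] by blast
    then show "sA (dlt X Z W t pq) (\<phi> (snd pq) (fst pq)) = 0" by simp
  qed (use RS in auto)
  also have "\<dots> = (\<Sum>r\<in>R. \<Sum>s\<in>S. sA (dlt X Z W t (r,s)) (\<phi> s r))"
    by (simp add: sum.cartesian_product case_prod_beta)
  finally show ?thesis using t by (simp add: gpi_def)
qed

lemma kact_G:
  assumes f: "f \<in> gcar W X"
  shows "kact sA (G W) X k f = (\<lambda>t. sA k (f t))"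
proof
  fix t
  show "kact sA (G W) X k f t = sA k (f t)"
  proof (cases "t \<in> B X W")
    case True
    have "kact sA (G W) X k f t = (\<Sum>u\<in>{t}. psi X W t (sA k 1) u * f u)"
      unfolding kact_def G_simps
      by (rule gact_ext[OF True]) (auto simp: psi_sA[OF True] psi_one[OF True])
    also have "\<dots> = sA k (f t)" by (simp add: psi_sA[OF True] psi_one[OF True] sA_mult1)
    finally show ?thesis .
  next
    case False
    then show ?thesis using f by (simp add: kact_def gact_def gcar_def)
  qed
qed

end

context ent begin

lemma gact_car: "gact W X a f \<in> gcar W X" by (simp add: gact_def gcar_def)
lemma gpi_car: "gpi W X Z \<phi> \<in> gcar W X" by (simp add: gpi_def gcar_def)

lemma gact_one: "f \<in> gcar W X \<Longrightarrow> gact W X 1 f = f"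
proof
  fix t assume f: "f \<in> gcar W X"
  show "gact W X 1 f t = f t"
  proof (cases "t \<in> B X W")
    case True
    have "gact W X 1 f t = (\<Sum>u\<in>{t}. psi X W t 1 u * f u)"
      by (rule gact_ext[OF True]) (auto simp: psi_one[OF True])
    then show ?thesis by (simp add: psi_one[OF True])
  qed (use f in \<open>simp add: gact_def gcar_def\<close>)
qed

lemma gact_addm: "gact W X a (f + g) = gact W X a f + gact W X a g"
  by (auto simp: gact_def distrib_left sum.distrib fun_eq_iff)

lemma gact_adda: "gact W X (a + b) f = gact W X a f + gact W X b f"
proof
  fix t
  show "gact W X (a + b) f t = (gact W X a f + gact W X b f) t"
  proof (cases "t \<in> B X W")
    case True
    define T where "T = {u. psi X W t a u \<noteq> 0} \<union> {u. psi X W t b u \<noteq> 0}"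
    have T: "finite T" unfolding T_def using psi_fin[OF True] by simp
    have "gact W X (a + b) f t = (\<Sum>u\<in>T. psi X W t (a+b) u * f u)"
      by (rule gact_ext[OF True T]) (auto simp: T_def psi_add[OF True])
    moreover have "gact W X a f t = (\<Sum>u\<in>T. psi X W t a u * f u)"
      by (rule gact_ext[OF True T]) (auto simp: T_def)
    moreover have "gact W X b f t = (\<Sum>u\<in>T. psi X W t b u * f u)"
      by (rule gact_ext[OF True T]) (auto simp: T_def)
    ultimately show ?thesis by (simp add: psi_add[OF True] distrib_right sum.distrib)
  qed (simp add: gact_def)
qed

lemma gact_mult: "gact W X (a * b) f = gact W X a (gact W X b f)"
proof
  fix t
  show "gact W X (a * b) f t = gact W X a (gact W X b f) t"
  proof (cases "t \<in> B X W")
    case True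
    define V where "V = {v. psi X W t a v \<noteq> 0}"
    have V: "finite V" "V \<subseteq> B X W" unfolding V_def using psi_fs[OF True] by auto
    define U where "U = {u. psi X W t (a*b) u \<noteq> 0} \<union> (\<Union>v\<in>V. {u. psi X W v b u \<noteq> 0})"
    have U: "finite U" unfolding U_def using psi_fin[OF True] psi_fin V by auto
    have "gact W X (a * b) f t = (\<Sum>u\<in>U. psi X W t (a*b) u * f u)"
      by (rule gact_ext[OF True U]) (auto simp: U_def)
    also have "\<dots> = (\<Sum>u\<in>U. (\<Sum>v\<in>V. psi X W t a v * psi X W v b u) * f u)"
    proof (rule sum.cong[OF refl])
      fix u
      have "{v \<in> B X W. psi X W t a v \<noteq> 0} = V" using V unfolding V_def by auto
      then show "psi X W t (a*b) u * f u = (\<Sum>v\<in>V. psi X W t a v * psi X W v b u) * f u"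
        using psi_mult[OF True, of a b u] by simp
    qed
    also have "\<dots> = (\<Sum>v\<in>V. psi X W t a v * (\<Sum>u\<in>U. psi X W v b u * f u))"
      by (simp add: sum_distrib_left sum_distrib_right mult.assoc sum.swap[of _ U])
    also have "\<dots> = (\<Sum>v\<in>V. psi X W t a v * gact W X b f v)"
    proof (rule sum.cong[OF refl])
      fix v assume v: "v \<in> V"
      have "gact W X b f v = (\<Sum>u\<in>U. psi X W v b u * f u)"
        by (rule gact_ext[OF _ U]) (use v V in \<open>auto simp: U_def\<close>)
      then show "psi X W t a v * (\<Sum>u\<in>U. psi X W v b u * f u) = psi X W t a v * gact W X b f v" by simp
    qed
    also have "\<dots> = gact W X a (gact W X b f) t"
      by (rule gact_ext[OF True V(1), symmetric]) (auto simp: V_def)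
    finally show ?thesis .
  qed (simp add: gact_def)
qed

end

context ent begin

lemma gpi_add: "gpi W X Y (\<lambda>s\<in>B X Y. \<phi> s + \<phi>' s) = gpi W X Y \<phi> + gpi W X Y \<phi>'"
  unfolding gpi_def fun_eq_iff
  by (auto simp: sA_adda[symmetric] sum.distrib[symmetric] intro!: sum.cong)

lemma gpi_k:
  assumes phi: "\<phi> \<in> B X Y \<rightarrow>\<^sub>E gcar W Y"
  shows "gpi W X Y (\<lambda>s\<in>B X Y. kact sA (G W) Y k (\<phi> s)) = kact sA (G W) X k (gpi W X Y \<phi>)"
proof -
  have e: "\<And>s. s \<in> B X Y \<Longrightarrow> kact sA (G W) Y k (\<phi> s) = (\<lambda>r. sA k (\<phi> s r))"
    using phi by (intro kact_G) auto
  show ?thesis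
    unfolding kact_G[OF gpi_car] unfolding gpi_def fun_eq_iff
    by (auto simp: e sA_sum sA_comm intro!: sum.cong)
qed

lemma gpi_counit:
  assumes f: "f \<in> gcar W X"
  shows "gpi W X X (\<lambda>s\<in>B X X. kact sA (G W) X (eps X s) f) = f"
proof
  fix t
  show "gpi W X X (\<lambda>s\<in>B X X. kact sA (G W) X (eps X s) f) t = f t"
  proof (cases "t \<in> B X W")
    case True
    define D where "D = {pq. dlt X X W t pq \<noteq> 0}"
    have D: "finite D" "D \<subseteq> B X W \<times> B X X" unfolding D_def using dlt_fin[OF True] dlt_sub[OF True] by auto
    define R where "R = fst ` D \<union> {t}"
    define S where "S = snd ` D"
    have RS: "finite R" "finite S" "R \<subseteq> B X W" "S \<subseteq> B X X" unfolding R_def S_def using D True by auto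
    have "gpi W X X (\<lambda>s\<in>B X X. kact sA (G W) X (eps X s) f) t
        = (\<Sum>r\<in>R. \<Sum>s\<in>S. sA (dlt X X W t (r,s)) ((\<lambda>s\<in>B X X. kact sA (G W) X (eps X s) f) s r))"
      by (rule gpi_ext[OF True RS(1,2)]) (auto simp: R_def S_def D_def image_iff)
    also have "\<dots> = (\<Sum>r\<in>R. sA (\<Sum>s\<in>S. eps X s * dlt X X W t (r,s)) (f r))"
    proof (rule sum.cong[OF refl])
      fix r assume r: "r \<in> R"
      have "(\<Sum>s\<in>S. sA (dlt X X W t (r,s)) ((\<lambda>s\<in>B X X. kact sA (G W) X (eps X s) f) s r))
          = (\<Sum>s\<in>S. sA (eps X s * dlt X X W t (r,s)) (f r))"
      proof (rule sum.cong[OF refl])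
        fix s assume "s \<in> S"
        then have "s \<in> B X X" using RS by auto
        then show "sA (dlt X X W t (r,s)) ((\<lambda>s\<in>B X X. kact sA (G W) X (eps X s) f) s r)
          = sA (eps X s * dlt X X W t (r,s)) (f r)"
          by (simp add: kact_G[OF f] sA_comp mult.commute)
      qed
      then show "(\<Sum>s\<in>S. sA (dlt X X W t (r,s)) ((\<lambda>s\<in>B X X. kact sA (G W) X (eps X s) f) s r))
          = sA (\<Sum>s\<in>S. eps X s * dlt X X W t (r,s)) (f r)" by (simp add: sA_sumk)
    qed
    also have "\<dots> = (\<Sum>r\<in>R. sA (if r = t then 1 else 0) (f r))"
    proof (rule sum.cong[OF refl])
      fix r assume r: "r \<in> R"
      have "(\<Sum>s\<in>{s \<in> B X X. dlt X X W t (r, s) \<noteq> 0}. eps X s * dlt X X W t (r, s))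
          = (\<Sum>s\<in>S. eps X s * dlt X X W t (r,s))"
        by (rule sum_ext) (use RS dlt_sub[OF True] in \<open>auto simp: S_def D_def image_iff\<close>)
      then show "sA (\<Sum>s\<in>S. eps X s * dlt X X W t (r,s)) (f r) = sA (if r = t then 1 else 0) (f r)"
        using counit2[OF True, of r] r RS by auto
    qed
    also have "\<dots> = (\<Sum>r\<in>R. if r = t then f r else 0)"
      by (rule sum.cong) (auto simp: sA_one)
    also have "\<dots> = f t" using RS by (simp add: R_def)
    finally show ?thesis .
  qed (use f in \<open>simp add: gpi_def gcar_def\<close>)
qed

end

context ent begin

lemma sum_app: "(sum f A) x = (\<Sum>a\<in>A. f a x)"
  by (induction A rule: infinite_finite_induct) auto

lemma gpi_assoc:
  assumes Phi: "\<Phi> \<in> (B Y Z \<times> B X Y) \<rightarrow>\<^sub>E gcar W Z"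
  shows "gpi W X Z (\<lambda>s\<in>B X Z. \<Sum>pq\<in>{pq \<in> B Y Z \<times> B X Y. dlt X Y Z s pq \<noteq> 0}.
                                  kact sA (G W) Z (dlt X Y Z s pq) (\<Phi> pq))
       = gpi W X Y (\<lambda>q\<in>B X Y. gpi W Y Z (\<lambda>p\<in>B Y Z. \<Phi> (p, q)))"
proof
  fix t
  show "gpi W X Z (\<lambda>s\<in>B X Z. \<Sum>pq\<in>{pq \<in> B Y Z \<times> B X Y. dlt X Y Z s pq \<noteq> 0}.
                                  kact sA (G W) Z (dlt X Y Z s pq) (\<Phi> pq)) t
       = gpi W X Y (\<lambda>q\<in>B X Y. gpi W Y Z (\<lambda>p\<in>B Y Z. \<Phi> (p, q))) t"
  proof (cases "t \<in> B X W")
    case True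
    define D1 where "D1 = {pq. dlt X Z W t pq \<noteq> 0}"
    have D1: "finite D1" "D1 \<subseteq> B Z W \<times> B X Z" unfolding D1_def using dlt_fin[OF True] dlt_sub[OF True] by auto
    define S where "S = snd ` D1"
    have S: "finite S" "S \<subseteq> B X Z" unfolding S_def using D1 by auto
    define D2 where "D2 = (\<Union>s\<in>S. {pq. dlt X Y Z s pq \<noteq> 0})"
    have D2: "finite D2" "D2 \<subseteq> B Y Z \<times> B X Y" unfolding D2_def using S dlt_fin dlt_sub by blast+
    define D3 where "D3 = {pq. dlt X Y W t pq \<noteq> 0}"
    have D3: "finite D3" "D3 \<subseteq> B Y W \<times> B X Y" unfolding D3_def using dlt_fin[OF True] dlt_sub[OF True] by auto
    define R' where "R' = fst ` D3"
    have R': "finite R'" "R' \<subseteq> B Y W" unfolding R'_def using D3 by auto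
    define D4 where "D4 = (\<Union>r\<in>R'. {pq. dlt Y Z W r pq \<noteq> 0})"
    have D4: "finite D4" "D4 \<subseteq> B Z W \<times> B Y Z" unfolding D4_def using R' dlt_fin dlt_sub by blast+
    define R where "R = fst ` D1 \<union> fst ` D4"
    define P where "P = fst ` D2 \<union> snd ` D4"
    define Q where "Q = snd ` D2 \<union> snd ` D3"
    have R: "finite R" "R \<subseteq> B Z W" unfolding R_def using D1 D4 by auto
    have P: "finite P" "P \<subseteq> B Y Z" unfolding P_def using D2 D4 by auto
    have Q: "finite Q" "Q \<subseteq> B X Y" unfolding Q_def using D2 D3 by auto
    have PhiC: "\<And>p q. p \<in> B Y Z \<Longrightarrow> q \<in> B X Y \<Longrightarrow> \<Phi> (p,q) \<in> gcar W Z" using Phi by auto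
    define F where "F = (\<lambda>r p q. \<Phi> (p,q) r)"
    have "gpi W X Z (\<lambda>s\<in>B X Z. \<Sum>pq\<in>{pq \<in> B Y Z \<times> B X Y. dlt X Y Z s pq \<noteq> 0}.
                                  kact sA (G W) Z (dlt X Y Z s pq) (\<Phi> pq)) t
       = (\<Sum>r\<in>R. \<Sum>s\<in>S. sA (dlt X Z W t (r,s)) ((\<lambda>s\<in>B X Z. \<Sum>pq\<in>{pq \<in> B Y Z \<times> B X Y. dlt X Y Z s pq \<noteq> 0}.
                                  kact sA (G W) Z (dlt X Y Z s pq) (\<Phi> pq)) s r))"
      by (rule gpi_ext[OF True R(1) S(1)]) (auto simp: R_def S_def D1_def image_iff)
    also have "\<dots> = (\<Sum>r\<in>R. \<Sum>s\<in>S. \<Sum>p\<in>P. \<Sum>q\<in>Q. sA (dlt X Z W t (r,s) * dlt X Y Z s (p,q)) (F r p q))"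
    proof (intro sum.cong refl)
      fix r s assume r: "r \<in> R" and s: "s \<in> S"
      have sB: "s \<in> B X Z" using s S by auto
      have "((\<lambda>s\<in>B X Z. \<Sum>pq\<in>{pq \<in> B Y Z \<times> B X Y. dlt X Y Z s pq \<noteq> 0}.
                                  kact sA (G W) Z (dlt X Y Z s pq) (\<Phi> pq)) s r)
          = (\<Sum>pq\<in>{pq \<in> B Y Z \<times> B X Y. dlt X Y Z s pq \<noteq> 0}. sA (dlt X Y Z s pq) (\<Phi> pq r))"
        using sB by (auto simp: sum_app kact_G PhiC intro!: sum.cong)
      also have "\<dots> = (\<Sum>pq\<in>P \<times> Q. sA (dlt X Y Z s pq) (\<Phi> pq r))"
      proof (rule sum_ext)
        show "{x \<in> B Y Z \<times> B X Y. dlt X Y Z s x \<noteq> 0} \<subseteq> P \<times> Q"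
          using s unfolding P_def Q_def D2_def by force
        fix pq assume "pq \<in> P \<times> Q" "\<not> (pq \<in> B Y Z \<times> B X Y \<and> dlt X Y Z s pq \<noteq> 0)"
        then have "dlt X Y Z s pq = 0" using P Q by auto
        then show "sA (dlt X Y Z s pq) (\<Phi> pq r) = 0" by simp
      qed (use P Q in auto)
      also have "\<dots> = (\<Sum>p\<in>P. \<Sum>q\<in>Q. sA (dlt X Y Z s (p,q)) (F r p q))"
        by (simp add: sum.cartesian_product case_prod_beta F_def)
      finally show "sA (dlt X Z W t (r,s)) ((\<lambda>s\<in>B X Z. \<Sum>pq\<in>{pq \<in> B Y Z \<times> B X Y. dlt X Y Z s pq \<noteq> 0}.
                                  kact sA (G W) Z (dlt X Y Z s pq) (\<Phi> pq)) s r)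
          = (\<Sum>p\<in>P. \<Sum>q\<in>Q. sA (dlt X Z W t (r,s) * dlt X Y Z s (p,q)) (F r p q))"
        by (simp add: sA_sum sA_comp)
    qed
    also have "\<dots> = (\<Sum>r\<in>R. \<Sum>p\<in>P. \<Sum>q\<in>Q. \<Sum>s\<in>S. sA (dlt X Z W t (r,s) * dlt X Y Z s (p,q)) (F r p q))"
    proof (rule sum.cong[OF refl])
      fix r
      have "(\<Sum>s\<in>S. \<Sum>p\<in>P. \<Sum>q\<in>Q. sA (dlt X Z W t (r,s) * dlt X Y Z s (p,q)) (F r p q))
          = (\<Sum>p\<in>P. \<Sum>s\<in>S. \<Sum>q\<in>Q. sA (dlt X Z W t (r,s) * dlt X Y Z s (p,q)) (F r p q))"
        by (rule sum.swap)
      also have "\<dots> = (\<Sum>p\<in>P. \<Sum>q\<in>Q. \<Sum>s\<in>S. sA (dlt X Z W t (r,s) * dlt X Y Z s (p,q)) (F r p q))"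
        by (rule sum.cong[OF refl], rule sum.swap)
      finally show "(\<Sum>s\<in>S. \<Sum>p\<in>P. \<Sum>q\<in>Q. sA (dlt X Z W t (r,s) * dlt X Y Z s (p,q)) (F r p q))
          = (\<Sum>p\<in>P. \<Sum>q\<in>Q. \<Sum>s\<in>S. sA (dlt X Z W t (r,s) * dlt X Y Z s (p,q)) (F r p q))" .
    qed
    also have "\<dots> = (\<Sum>r\<in>R. \<Sum>p\<in>P. \<Sum>q\<in>Q. sA (\<Sum>s\<in>S. dlt X Z W t (r,s) * dlt X Y Z s (p,q)) (F r p q))"
      by (simp add: sA_sumk)
    also have "\<dots> = (\<Sum>r\<in>R. \<Sum>p\<in>P. \<Sum>q\<in>Q. sA (\<Sum>r'\<in>R'. dlt X Y W t (r',q) * dlt Y Z W r' (r,p)) (F r p q))"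
    proof (intro sum.cong refl)
      fix r p q assume r: "r \<in> R" and p: "p \<in> P" and q: "q \<in> Q"
      have rB: "r \<in> B Z W" and pB: "p \<in> B Y Z" and qB: "q \<in> B X Y" using r p q R P Q by auto
      have e1: "(\<Sum>s\<in>{s \<in> B X Z. dlt X Z W t (r, s) \<noteq> 0}. dlt X Z W t (r, s) * dlt X Y Z s (p, q))
          = (\<Sum>s\<in>S. dlt X Z W t (r,s) * dlt X Y Z s (p,q))"
        by (rule sum_ext) (use S in \<open>auto simp: S_def D1_def image_iff\<close>)
      have e2: "(\<Sum>s\<in>{s \<in> B Y W. dlt X Y W t (s, q) \<noteq> 0}. dlt X Y W t (s, q) * dlt Y Z W s (r, p))
          = (\<Sum>r'\<in>R'. dlt X Y W t (r',q) * dlt Y Z W r' (r,p))"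
        by (rule sum_ext) (use R' in \<open>auto simp: R'_def D3_def image_iff\<close>)
      have "(\<Sum>s\<in>S. dlt X Z W t (r,s) * dlt X Y Z s (p,q)) = (\<Sum>r'\<in>R'. dlt X Y W t (r',q) * dlt Y Z W r' (r,p))"
        using coassoc[OF True rB pB qB] e1 e2 by simp
      then show "sA (\<Sum>s\<in>S. dlt X Z W t (r,s) * dlt X Y Z s (p,q)) (F r p q)
          = sA (\<Sum>r'\<in>R'. dlt X Y W t (r',q) * dlt Y Z W r' (r,p)) (F r p q)" by simp
    qed
    also have "\<dots> = (\<Sum>r\<in>R. \<Sum>p\<in>P. \<Sum>q\<in>Q. \<Sum>r'\<in>R'. sA (dlt X Y W t (r',q) * dlt Y Z W r' (r,p)) (F r p q))"
      by (simp add: sA_sumk)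
    also have "\<dots> = (\<Sum>r'\<in>R'. \<Sum>q\<in>Q. \<Sum>r\<in>R. \<Sum>p\<in>P. sA (dlt X Y W t (r',q) * dlt Y Z W r' (r,p)) (F r p q))"
    proof -
      let ?g = "\<lambda>r' q r p. sA (dlt X Y W t (r',q) * dlt Y Z W r' (r,p)) (F r p q)"
      have "(\<Sum>r'\<in>R'. \<Sum>q\<in>Q. \<Sum>r\<in>R. \<Sum>p\<in>P. ?g r' q r p) = (\<Sum>r'\<in>R'. \<Sum>r\<in>R. \<Sum>q\<in>Q. \<Sum>p\<in>P. ?g r' q r p)"
        by (rule sum.cong[OF refl], rule sum.swap)
      also have "\<dots> = (\<Sum>r\<in>R. \<Sum>r'\<in>R'. \<Sum>q\<in>Q. \<Sum>p\<in>P. ?g r' q r p)" by (rule sum.swap)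
      also have "\<dots> = (\<Sum>r\<in>R. \<Sum>r'\<in>R'. \<Sum>p\<in>P. \<Sum>q\<in>Q. ?g r' q r p)"
        by (rule sum.cong[OF refl], rule sum.cong[OF refl], rule sum.swap)
      also have "\<dots> = (\<Sum>r\<in>R. \<Sum>p\<in>P. \<Sum>r'\<in>R'. \<Sum>q\<in>Q. ?g r' q r p)"
        by (rule sum.cong[OF refl], rule sum.swap)
      also have "\<dots> = (\<Sum>r\<in>R. \<Sum>p\<in>P. \<Sum>q\<in>Q. \<Sum>r'\<in>R'. ?g r' q r p)"
        by (rule sum.cong[OF refl], rule sum.cong[OF refl], rule sum.swap)
      finally show ?thesis by simp
    qed
    also have "\<dots> = (\<Sum>r'\<in>R'. \<Sum>q\<in>Q. sA (dlt X Y W t (r',q)) ((\<lambda>q\<in>B X Y. gpi W Y Z (\<lambda>p\<in>B Y Z. \<Phi> (p, q))) q r'))"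
    proof (intro sum.cong refl)
      fix r' q assume r': "r' \<in> R'" and q: "q \<in> Q"
      have r'B: "r' \<in> B Y W" and qB: "q \<in> B X Y" using r' q R' Q by auto
      have "gpi W Y Z (\<lambda>p\<in>B Y Z. \<Phi> (p, q)) r' = (\<Sum>r\<in>R. \<Sum>p\<in>P. sA (dlt Y Z W r' (r,p)) ((\<lambda>p\<in>B Y Z. \<Phi> (p, q)) p r))"
        by (rule gpi_ext[OF r'B R(1) P(1)]) (use r' in \<open>auto simp: R_def P_def D4_def image_iff\<close>)
      also have "\<dots> = (\<Sum>r\<in>R. \<Sum>p\<in>P. sA (dlt Y Z W r' (r,p)) (F r p q))"
        using P by (auto simp: F_def intro!: sum.cong)
      finally show "(\<Sum>r\<in>R. \<Sum>p\<in>P. sA (dlt X Y W t (r',q) * dlt Y Z W r' (r,p)) (F r p q))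
          = sA (dlt X Y W t (r',q)) ((\<lambda>q\<in>B X Y. gpi W Y Z (\<lambda>p\<in>B Y Z. \<Phi> (p, q))) q r')"
        using qB by (simp add: sA_sum sA_comp)
    qed
    also have "\<dots> = gpi W X Y (\<lambda>q\<in>B X Y. gpi W Y Z (\<lambda>p\<in>B Y Z. \<Phi> (p, q))) t"
      by (rule gpi_ext[OF True R'(1) Q(1), symmetric]) (auto simp: R'_def Q_def D3_def image_iff)
    finally show ?thesis .
  qed (simp add: gpi_def)
qed

end

context ent begin

lemma gact_gpi:
  assumes phi: "\<phi> \<in> B X Y \<rightarrow>\<^sub>E gcar W Y"
  shows "gact W X a (gpi W X Y \<phi>)
       = gpi W X Y (\<lambda>s\<in>B X Y. \<Sum>u\<in>{u \<in> B X Y. psi X Y s a u \<noteq> 0}. gact W Y (psi X Y s a u) (\<phi> u))"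
proof
  fix t
  show "gact W X a (gpi W X Y \<phi>) t
       = gpi W X Y (\<lambda>s\<in>B X Y. \<Sum>u\<in>{u \<in> B X Y. psi X Y s a u \<noteq> 0}. gact W Y (psi X Y s a u) (\<phi> u)) t"
  proof (cases "t \<in> B X W")
    case True
    define V where "V = {v. psi X W t a v \<noteq> 0}"
    have V: "finite V" "V \<subseteq> B X W" unfolding V_def using psi_fs[OF True] by auto
    define E where "E = {pq. dlt X Y W t pq \<noteq> 0}"
    have E: "finite E" "E \<subseteq> B Y W \<times> B X Y" unfolding E_def using dlt_fin[OF True] dlt_sub[OF True] by auto
    define R' where "R' = fst ` E"
    define S where "S = snd ` E"
    have R': "finite R'" "R' \<subseteq> B Y W" unfolding R'_def using E by auto
    have S: "finite S" "S \<subseteq> B X Y" unfolding S_def using E by auto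
    define R where "R = (\<Union>v\<in>V. fst ` {pq. dlt X Y W v pq \<noteq> 0}) \<union>
       (\<Union>r'\<in>R'. \<Union>s\<in>S. \<Union>u\<in>{u. psi X Y s a u \<noteq> 0}. {r. psi Y W r' (psi X Y s a u) r \<noteq> 0})"
    define Q where "Q = (\<Union>v\<in>V. snd ` {pq. dlt X Y W v pq \<noteq> 0}) \<union> (\<Union>s\<in>S. {u. psi X Y s a u \<noteq> 0})"
    have R: "finite R" "R \<subseteq> B Y W"
    proof -
      have "finite (\<Union>v\<in>V. fst ` {pq. dlt X Y W v pq \<noteq> 0})" using V dlt_fin by blast
      moreover have "\<And>r' s. r' \<in> R' \<Longrightarrow> s \<in> S \<Longrightarrow>
          finite (\<Union>u\<in>{u. psi X Y s a u \<noteq> 0}. {r. psi Y W r' (psi X Y s a u) r \<noteq> 0})"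
        using R' S psi_fin by blast
      ultimately show "finite R" unfolding R_def using R' S by auto
      show "R \<subseteq> B Y W"
      proof
        fix r assume "r \<in> R"
        then consider v pq where "v \<in> V" "dlt X Y W v pq \<noteq> 0" "r = fst pq"
          | r' s u where "r' \<in> R'" "psi Y W r' (psi X Y s a u) r \<noteq> 0" unfolding R_def by blast
        then show "r \<in> B Y W"
        proof cases
          case 1 then show ?thesis using V dlt_sub[of v X W Y pq] by (auto simp: mem_Times_iff)
        next
          case 2 then show ?thesis using R' psi_sub by blast
        qed
      qed
    qed
    have Q: "finite Q" "Q \<subseteq> B X Y"
    proof -
      show "finite Q" unfolding Q_def using V S dlt_fin psi_fin by blast
      show "Q \<subseteq> B X Y"
      proof
        fix q assume "q \<in> Q"
        then consider v pq where "v \<in> V" "dlt X Y W v pq \<noteq> 0" "q = snd pq"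
          | s where "s \<in> S" "psi X Y s a q \<noteq> 0" unfolding Q_def by blast
        then show "q \<in> B X Y"
        proof cases
          case 1 then show ?thesis using V dlt_sub[of v X W Y pq] by (auto simp: mem_Times_iff)
        next
          case 2 then show ?thesis using S psi_sub by blast
        qed
      qed
    qed
    have phiC: "\<And>q r. q \<in> B X Y \<Longrightarrow> r \<notin> B Y W \<Longrightarrow> \<phi> q r = 0" using phi unfolding gcar_def by auto
    define g where "g = (\<lambda>r q r' s. sA (dlt X Y W t (r',s)) (psi Y W r' (psi X Y s a q) r) * \<phi> q r)"
    have "gact W X a (gpi W X Y \<phi>) t = (\<Sum>v\<in>V. psi X W t a v * gpi W X Y \<phi> v)"
      by (rule gact_ext[OF True V(1)]) (auto simp: V_def)
    also have "\<dots> = (\<Sum>v\<in>V. \<Sum>r\<in>R. \<Sum>q\<in>Q. sA (dlt X Y W v (r,q)) (psi X W t a v) * \<phi> q r)"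
    proof (rule sum.cong[OF refl])
      fix v assume v: "v \<in> V"
      have vB: "v \<in> B X W" using v V by auto
      have "gpi W X Y \<phi> v = (\<Sum>r\<in>R. \<Sum>q\<in>Q. sA (dlt X Y W v (r,q)) (\<phi> q r))"
        by (rule gpi_ext[OF vB R(1) Q(1)]) (use v in \<open>auto simp: R_def Q_def image_iff\<close>)
      then show "psi X W t a v * gpi W X Y \<phi> v = (\<Sum>r\<in>R. \<Sum>q\<in>Q. sA (dlt X Y W v (r,q)) (psi X W t a v) * \<phi> q r)"
        by (simp add: sum_distrib_left sA_swap)
    qed
    also have "\<dots> = (\<Sum>r\<in>R. \<Sum>q\<in>Q. \<Sum>v\<in>V. sA (dlt X Y W v (r,q)) (psi X W t a v) * \<phi> q r)"
    proof -
      have "(\<Sum>v\<in>V. \<Sum>r\<in>R. \<Sum>q\<in>Q. sA (dlt X Y W v (r,q)) (psi X W t a v) * \<phi> q r)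
          = (\<Sum>r\<in>R. \<Sum>v\<in>V. \<Sum>q\<in>Q. sA (dlt X Y W v (r,q)) (psi X W t a v) * \<phi> q r)" by (rule sum.swap)
      also have "\<dots> = (\<Sum>r\<in>R. \<Sum>q\<in>Q. \<Sum>v\<in>V. sA (dlt X Y W v (r,q)) (psi X W t a v) * \<phi> q r)"
        by (rule sum.cong[OF refl], rule sum.swap)
      finally show ?thesis .
    qed
    also have "\<dots> = (\<Sum>r\<in>R. \<Sum>q\<in>Q. \<Sum>r'\<in>R'. \<Sum>s\<in>S. g r q r' s)"
    proof (rule sum.cong[OF refl], rule sum.cong[OF refl])
      fix r q assume r: "r \<in> R" and q: "q \<in> Q"
      have rB: "r \<in> B Y W" and qB: "q \<in> B X Y" using r q R Q by auto
      have "{u \<in> B X W. psi X W t a u \<noteq> 0} = V" using V unfolding V_def by auto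
      then have "(\<Sum>v\<in>V. sA (dlt X Y W v (r,q)) (psi X W t a v))
         = (\<Sum>pq\<in>{pq \<in> B Y W \<times> B X Y. dlt X Y W t pq \<noteq> 0}.
           psi Y W (fst pq) (sA (dlt X Y W t pq) (psi X Y (snd pq) a q)) r)"
        using psi_compat[OF True rB qB, of a] by simp
      also have "\<dots> = (\<Sum>pq\<in>R' \<times> S. psi Y W (fst pq) (sA (dlt X Y W t pq) (psi X Y (snd pq) a q)) r)"
      proof (rule sum_ext)
        fix pq assume pq: "pq \<in> R' \<times> S" "\<not> (pq \<in> B Y W \<times> B X Y \<and> dlt X Y W t pq \<noteq> 0)"
        then have "dlt X Y W t pq = 0" "fst pq \<in> B Y W" using R' S by auto
        then show "psi Y W (fst pq) (sA (dlt X Y W t pq) (psi X Y (snd pq) a q)) r = 0" by simp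
      qed (use R' S in \<open>auto simp: R'_def S_def E_def image_iff\<close>)
      also have "\<dots> = (\<Sum>pq\<in>R' \<times> S. sA (dlt X Y W t pq) (psi Y W (fst pq) (psi X Y (snd pq) a q) r))"
        by (rule sum.cong) (use R' in \<open>auto simp: psi_sA\<close>)
      also have "\<dots> = (\<Sum>r'\<in>R'. \<Sum>s\<in>S. sA (dlt X Y W t (r',s)) (psi Y W r' (psi X Y s a q) r))"
        by (simp add: sum.cartesian_product case_prod_beta)
      finally have eq: "(\<Sum>v\<in>V. sA (dlt X Y W v (r,q)) (psi X W t a v))
         = (\<Sum>r'\<in>R'. \<Sum>s\<in>S. sA (dlt X Y W t (r',s)) (psi Y W r' (psi X Y s a q) r))" .
      have "(\<Sum>v\<in>V. sA (dlt X Y W v (r,q)) (psi X W t a v) * \<phi> q r)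
          = (\<Sum>v\<in>V. sA (dlt X Y W v (r,q)) (psi X W t a v)) * \<phi> q r" by (simp add: sum_distrib_right)
      also have "\<dots> = (\<Sum>r'\<in>R'. \<Sum>s\<in>S. sA (dlt X Y W t (r',s)) (psi Y W r' (psi X Y s a q) r)) * \<phi> q r"
        using eq by simp
      also have "\<dots> = (\<Sum>r'\<in>R'. \<Sum>s\<in>S. g r q r' s)" by (simp add: g_def sum_distrib_right)
      finally show "(\<Sum>v\<in>V. sA (dlt X Y W v (r,q)) (psi X W t a v) * \<phi> q r) = (\<Sum>r'\<in>R'. \<Sum>s\<in>S. g r q r' s)" .
    qed
    also have "\<dots> = (\<Sum>r'\<in>R'. \<Sum>s\<in>S. \<Sum>q\<in>Q. \<Sum>r\<in>R. g r q r' s)"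
    proof -
      have "(\<Sum>r'\<in>R'. \<Sum>s\<in>S. \<Sum>q\<in>Q. \<Sum>r\<in>R. g r q r' s) = (\<Sum>r'\<in>R'. \<Sum>s\<in>S. \<Sum>r\<in>R. \<Sum>q\<in>Q. g r q r' s)"
        by (rule sum.cong[OF refl], rule sum.cong[OF refl], rule sum.swap)
      also have "\<dots> = (\<Sum>r'\<in>R'. \<Sum>r\<in>R. \<Sum>s\<in>S. \<Sum>q\<in>Q. g r q r' s)"
        by (rule sum.cong[OF refl], rule sum.swap)
      also have "\<dots> = (\<Sum>r\<in>R. \<Sum>r'\<in>R'. \<Sum>s\<in>S. \<Sum>q\<in>Q. g r q r' s)" by (rule sum.swap)
      also have "\<dots> = (\<Sum>r\<in>R. \<Sum>r'\<in>R'. \<Sum>q\<in>Q. \<Sum>s\<in>S. g r q r' s)"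
        by (rule sum.cong[OF refl], rule sum.cong[OF refl], rule sum.swap)
      also have "\<dots> = (\<Sum>r\<in>R. \<Sum>q\<in>Q. \<Sum>r'\<in>R'. \<Sum>s\<in>S. g r q r' s)"
        by (rule sum.cong[OF refl], rule sum.swap)
      finally show ?thesis by simp
    qed
    also have "\<dots> = (\<Sum>r'\<in>R'. \<Sum>s\<in>S. sA (dlt X Y W t (r',s))
        ((\<lambda>s\<in>B X Y. \<Sum>u\<in>{u \<in> B X Y. psi X Y s a u \<noteq> 0}. gact W Y (psi X Y s a u) (\<phi> u)) s r'))"
    proof (intro sum.cong refl)
      fix r' s assume r': "r' \<in> R'" and s: "s \<in> S"
      have r'B: "r' \<in> B Y W" and sB: "s \<in> B X Y" using r' s R' S by auto
      have "((\<lambda>s\<in>B X Y. \<Sum>u\<in>{u \<in> B X Y. psi X Y s a u \<noteq> 0}. gact W Y (psi X Y s a u) (\<phi> u)) s r')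
         = (\<Sum>u\<in>{u \<in> B X Y. psi X Y s a u \<noteq> 0}. gact W Y (psi X Y s a u) (\<phi> u) r')"
        using sB by (simp add: sum_app)
      also have "\<dots> = (\<Sum>u\<in>{u \<in> B X Y. psi X Y s a u \<noteq> 0}. \<Sum>r\<in>R. psi Y W r' (psi X Y s a u) r * \<phi> u r)"
      proof (rule sum.cong[OF refl])
        fix u assume u: "u \<in> {u \<in> B X Y. psi X Y s a u \<noteq> 0}"
        show "gact W Y (psi X Y s a u) (\<phi> u) r' = (\<Sum>r\<in>R. psi Y W r' (psi X Y s a u) r * \<phi> u r)"
          by (rule gact_ext[OF r'B R(1)]) (use r' s u in \<open>unfold R_def, blast\<close>)
      qed
      also have "\<dots> = (\<Sum>q\<in>Q. \<Sum>r\<in>R. psi Y W r' (psi X Y s a q) r * \<phi> q r)"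
      proof (rule sum_ext)
        fix u assume "u \<in> Q" "\<not> (u \<in> B X Y \<and> psi X Y s a u \<noteq> 0)"
        then have "psi X Y s a u = 0" using Q by auto
        then show "(\<Sum>r\<in>R. psi Y W r' (psi X Y s a u) r * \<phi> u r) = 0" using r'B by simp
      qed (use s Q in \<open>auto simp: Q_def\<close>)
      finally show "(\<Sum>q\<in>Q. \<Sum>r\<in>R. g r q r' s) = sA (dlt X Y W t (r',s))
        ((\<lambda>s\<in>B X Y. \<Sum>u\<in>{u \<in> B X Y. psi X Y s a u \<noteq> 0}. gact W Y (psi X Y s a u) (\<phi> u)) s r')"
        by (simp add: g_def sA_sum sA_ml)
    qed
    also have "\<dots> = gpi W X Y (\<lambda>s\<in>B X Y. \<Sum>u\<in>{u \<in> B X Y. psi X Y s a u \<noteq> 0}. gact W Y (psi X Y s a u) (\<phi> u)) t"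
      by (rule gpi_ext[OF True R'(1) S(1), symmetric]) (auto simp: R'_def S_def E_def image_iff)
    finally show ?thesis .
  qed (simp add: gpi_def gact_def)
qed

end

context ent begin

lemma gcar_zero: "0 \<in> gcar W X" by (simp add: gcar_def)
lemma gcar_add: "f \<in> gcar W X \<Longrightarrow> g \<in> gcar W X \<Longrightarrow> f + g \<in> gcar W X" by (simp add: gcar_def)
lemma gcar_neg: "f \<in> gcar W X \<Longrightarrow> - f \<in> gcar W X" by (simp add: gcar_def)

lemma G_entw: "entw_ctr B dlt eps sA psi (G W)"
  unfolding entw_ctr_def G_simps
  by (auto simp: gcar_zero gcar_add gcar_neg gact_car gact_one gact_mult gact_adda gact_addm gpi_car gpi_add
      gpi_k gpi_assoc gpi_counit gact_gpi)

definition Hm :: "('x, 'm::ab_group_add, 'a, 'b) ectr \<Rightarrow> 'x \<Rightarrow> 'm \<Rightarrow> 'x \<Rightarrow> ('b \<Rightarrow> 'a) \<Rightarrow> 'm" where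
  "Hm M W m X f = epi M X W (\<lambda>s\<in>B X W. eact M W (f s) m)"

definition unitG :: "'x \<Rightarrow> 'b \<Rightarrow> 'a" where
  "unitG W = (\<lambda>s. if s \<in> B W W then sA (eps W s) 1 else 0)"

lemma unitG_car: "unitG W \<in> gcar W W" by (simp add: unitG_def gcar_def)

context
  fixes M :: "('x, 'm::ab_group_add, 'a, 'b) ectr"
  assumes M: "entw_ctr B dlt eps sA psi M"
begin

lemma M_act_car: "m \<in> ecar M X \<Longrightarrow> eact M X a m \<in> ecar M X"
  using M[unfolded entw_ctr_def, THEN conjunct2, THEN conjunct1] by blast
lemma M_act_mult: "m \<in> ecar M X \<Longrightarrow> eact M X (a * b) m = eact M X a (eact M X b m)"
  using M[unfolded entw_ctr_def, THEN conjunct2, THEN conjunct2, THEN conjunct2, THEN conjunct1] by blast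
lemma M_act_add: "m \<in> ecar M X \<Longrightarrow> eact M X (a + b) m = eact M X a m + eact M X b m"
  using M[unfolded entw_ctr_def, THEN conjunct2, THEN conjunct2, THEN conjunct2, THEN conjunct2, THEN conjunct1] by blast
lemma M_pi_car: "\<phi> \<in> B X Y \<rightarrow>\<^sub>E ecar M Y \<Longrightarrow> epi M X Y \<phi> \<in> ecar M X"
  using M[unfolded entw_ctr_def, THEN conjunct2, THEN conjunct2, THEN conjunct2, THEN conjunct2, THEN conjunct2, THEN conjunct2, THEN conjunct1] by blast
lemma M_pi_add: "\<phi> \<in> B X Y \<rightarrow>\<^sub>E ecar M Y \<Longrightarrow> \<phi>' \<in> B X Y \<rightarrow>\<^sub>E ecar M Y \<Longrightarrow>
        epi M X Y (\<lambda>s\<in>B X Y. \<phi> s + \<phi>' s) = epi M X Y \<phi> + epi M X Y \<phi>'"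
  using M[unfolded entw_ctr_def, THEN conjunct2, THEN conjunct2, THEN conjunct2, THEN conjunct2, THEN conjunct2, THEN conjunct2, THEN conjunct2, THEN conjunct1] by blast
lemma M_assoc: "\<Phi> \<in> (B Y Z \<times> B X Y) \<rightarrow>\<^sub>E ecar M Z \<Longrightarrow>
        epi M X Z (\<lambda>s\<in>B X Z. \<Sum>pq\<in>{pq \<in> B Y Z \<times> B X Y. dlt X Y Z s pq \<noteq> 0}.
                                  kact sA M Z (dlt X Y Z s pq) (\<Phi> pq))
      = epi M X Y (\<lambda>q\<in>B X Y. epi M Y Z (\<lambda>p\<in>B Y Z. \<Phi> (p, q)))"
  using M[unfolded entw_ctr_def, THEN conjunct2, THEN conjunct2, THEN conjunct2, THEN conjunct2, THEN conjunct2, THEN conjunct2, THEN conjunct2, THEN conjunct2, THEN conjunct2, THEN conjunct1] by blast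
lemma M_counit: "m \<in> ecar M X \<Longrightarrow> epi M X X (\<lambda>s\<in>B X X. kact sA M X (eps X s) m) = m"
  using M[unfolded entw_ctr_def, THEN conjunct2, THEN conjunct2, THEN conjunct2, THEN conjunct2, THEN conjunct2, THEN conjunct2, THEN conjunct2, THEN conjunct2, THEN conjunct2, THEN conjunct2, THEN conjunct1] by blast
lemma M_compat: "\<phi> \<in> B X Y \<rightarrow>\<^sub>E ecar M Y \<Longrightarrow>
        eact M X a (epi M X Y \<phi>)
      = epi M X Y (\<lambda>s\<in>B X Y. \<Sum>u\<in>{u \<in> B X Y. psi X Y s a u \<noteq> 0}. eact M Y (psi X Y s a u) (\<phi> u))"
  using M[unfolded entw_ctr_def, THEN conjunct2, THEN conjunct2, THEN conjunct2, THEN conjunct2, THEN conjunct2, THEN conjunct2, THEN conjunct2, THEN conjunct2, THEN conjunct2, THEN conjunct2, THEN conjunct2] by blast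

lemma M_act_zero: "m \<in> ecar M X \<Longrightarrow> eact M X 0 m = 0"
proof -
  assume m: "m \<in> ecar M X"
  have "eact M X 0 m + eact M X 0 m = eact M X 0 m + 0" using M_act_add[OF m, of 0 0] by simp
  then show ?thesis by simp
qed

lemma M_act_sum: "m \<in> ecar M X \<Longrightarrow> eact M X (sum g A) m = (\<Sum>a\<in>A. eact M X (g a) m)"
  by (induction A rule: infinite_finite_induct) (simp_all add: M_act_zero M_act_add)

lemma M_act_sA: "m \<in> ecar M X \<Longrightarrow> eact M X (sA k x) m = kact sA M X k (eact M X x m)"
  unfolding kact_def by (simp add: M_act_mult[symmetric] sA_mult1)

lemma Hm_hom:
  assumes m: "m \<in> ecar M W"
  shows "ectr_hom B (G W) M (Hm M W m)"
  unfolding ectr_hom_def G_simps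
proof (intro conjI allI impI)
  fix X f
  show "Hm M W m X f \<in> ecar M X" unfolding Hm_def by (rule M_pi_car) (use m M_act_car in auto)
next
  fix X f g
  have "(\<lambda>s\<in>B X W. eact M W ((f + g) s) m) = (\<lambda>s\<in>B X W. (\<lambda>s\<in>B X W. eact M W (f s) m) s + (\<lambda>s\<in>B X W. eact M W (g s) m) s)"
    using m by (auto simp: M_act_add)
  then show "Hm M W m X (f + g) = Hm M W m X f + Hm M W m X g"
    unfolding Hm_def by (simp only:) (rule M_pi_add, use m M_act_car in auto)
next
  fix X a f
  assume f: "f \<in> gcar W X"
  have phi: "(\<lambda>s\<in>B X W. eact M W (f s) m) \<in> B X W \<rightarrow>\<^sub>E ecar M W" using m M_act_car by auto
  have "eact M X a (Hm M W m X f) = epi M X W (\<lambda>s\<in>B X W. \<Sum>u\<in>{u \<in> B X W. psi X W s a u \<noteq> 0}.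
          eact M W (psi X W s a u) ((\<lambda>s\<in>B X W. eact M W (f s) m) u))"
    unfolding Hm_def by (rule M_compat[OF phi])
  also have "\<dots> = epi M X W (\<lambda>s\<in>B X W. eact M W (gact W X a f s) m)"
    by (rule arg_cong[where f = "epi M X W"]) (auto simp: gact_def M_act_sum[OF m] M_act_mult[OF m] intro!: sum.cong)
  finally show "Hm M W m X (gact W X a f) = eact M X a (Hm M W m X f)" unfolding Hm_def by simp
next
  fix X Z \<phi>
  assume phi: "\<phi> \<in> B X Z \<rightarrow>\<^sub>E gcar W Z"
  define \<Phi> where "\<Phi> = (\<lambda>pq\<in>B Z W \<times> B X Z. eact M W (\<phi> (snd pq) (fst pq)) m)"
  have Phi: "\<Phi> \<in> (B Z W \<times> B X Z) \<rightarrow>\<^sub>E ecar M W" unfolding \<Phi>_def using m M_act_car by auto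
  have "Hm M W m X (gpi W X Z \<phi>) = epi M X W (\<lambda>s\<in>B X W. \<Sum>pq\<in>{pq \<in> B Z W \<times> B X Z. dlt X Z W s pq \<noteq> 0}.
                                  kact sA M W (dlt X Z W s pq) (\<Phi> pq))"
    unfolding Hm_def
    by (rule arg_cong[where f = "epi M X W"]) (auto simp: gpi_def \<Phi>_def M_act_sum[OF m] M_act_sA[OF m] intro!: sum.cong)
  also have "\<dots> = epi M X Z (\<lambda>q\<in>B X Z. epi M Z W (\<lambda>p\<in>B Z W. \<Phi> (p, q)))"
    by (rule M_assoc[OF Phi])
  also have "\<dots> = epi M X Z (\<lambda>s\<in>B X Z. Hm M W m Z (\<phi> s))"
    unfolding Hm_def \<Phi>_def
    by (intro arg_cong[where f = "epi M X Z"] restrict_ext arg_cong[where f = "epi M Z W"]) auto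
  finally show "Hm M W m X (gpi W X Z \<phi>) = epi M X Z (\<lambda>s\<in>B X Z. Hm M W m Z (\<phi> s))" .
qed

lemma Hm_unit: "m \<in> ecar M W \<Longrightarrow> Hm M W m W (unitG W) = m"
  unfolding Hm_def unitG_def
  using M_counit[of m W] by (simp add: kact_def cong: restrict_cong)

end

end

theorem theorem3p10:
  fixes B :: "'x \<Rightarrow> 'x \<Rightarrow> 'b set"
    and dlt :: "'x \<Rightarrow> 'x \<Rightarrow> 'x \<Rightarrow> 'b \<Rightarrow> 'b \<times> 'b \<Rightarrow> 'k::field"
    and eps :: "'x \<Rightarrow> 'b \<Rightarrow> 'k"
    and sA :: "'k \<Rightarrow> 'a::ring_1 \<Rightarrow> 'a"
    and psi :: "'x \<Rightarrow> 'x \<Rightarrow> 'b \<Rightarrow> 'a \<Rightarrow> 'b \<Rightarrow> 'a"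
  assumes "k_algebra sA"
    and "coalgebra_so B dlt eps"
    and "entwining B dlt eps sA psi"
  shows "\<exists>Gs :: ('x, 'b \<Rightarrow> 'a, 'a, 'b) ectr set.
           (\<forall>G\<in>Gs. entw_ctr B dlt eps sA psi G)
         \<and> (\<forall>(M :: ('x, 'm::ab_group_add, 'a, 'b) ectr) (N :: ('x, 'n::ab_group_add, 'a, 'b) ectr)
               (F :: 'x \<Rightarrow> 'm \<Rightarrow> 'n) F'.
              entw_ctr B dlt eps sA psi M \<longrightarrow> entw_ctr B dlt eps sA psi N \<longrightarrow>
              ectr_hom B M N F \<longrightarrow> ectr_hom B M N F' \<longrightarrow> \<not> hom_eq M F F' \<longrightarrow>
              (\<exists>G\<in>Gs. \<exists>H :: 'x \<Rightarrow> ('b \<Rightarrow> 'a) \<Rightarrow> 'm.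
                  ectr_hom B G M H
                \<and> \<not> hom_eq G (\<lambda>X. F X \<circ> H X) (\<lambda>X. F' X \<circ> H X)))"
proof -
  interpret ent B dlt eps sA psi using assms by (unfold_locales)
  show ?thesis
  proof (intro exI[of _ "range G"] conjI ballI allI impI)
    fix Gx assume "Gx \<in> range G"
    then show "entw_ctr B dlt eps sA psi Gx" using G_entw by auto
  next
    fix M :: "('x, 'm::ab_group_add, 'a, 'b) ectr" and N :: "('x, 'n::ab_group_add, 'a, 'b) ectr"
      and F :: "'x \<Rightarrow> 'm \<Rightarrow> 'n" and F'
    assume M: "entw_ctr B dlt eps sA psi M" and ne: "\<not> hom_eq M F F'"
    then obtain W m where m: "m \<in> ecar M W" and d: "F W m \<noteq> F' W m" unfolding hom_eq_def by blast
    show "\<exists>G\<in>range G. \<exists>H :: 'x \<Rightarrow> ('b \<Rightarrow> 'a) \<Rightarrow> 'm.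
                  ectr_hom B G M H \<and> \<not> hom_eq G (\<lambda>X. F X \<circ> H X) (\<lambda>X. F' X \<circ> H X)"
    proof (intro bexI[of _ "G W"] exI[of _ "Hm M W m"] conjI)
      show "ectr_hom B (G W) M (Hm M W m)" by (rule Hm_hom[OF M m])
      show "\<not> hom_eq (G W) (\<lambda>X. F X \<circ> Hm M W m X) (\<lambda>X. F' X \<circ> Hm M W m X)"
        unfolding hom_eq_def
        by (intro notI, drule spec[of _ W], drule bspec[of _ _ "unitG W"]) (use unitG_car[of W] Hm_unit[OF M m] d in auto)
    qed simp
  qed
qed


end
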